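(* Let $X$ be a $T_0$ space. If $GSI_2$-convergence in $X$ is topological, then $X$ is strongly $QI_2$-continuous.
   Context: For a $T_0$ space $X$, the specialization order is $x\le y$ iff $x\in \mathrm{cl}\{y\}$; $\uparrow A=\{x: a\le x\text{ for some } a\in A\}$, $\uparrow x=\uparrow\{x\}$; $A^\uparrow$, $A^\downarrow$ are the sets of upper and lower bounds of $A$, and $A^\delta=(A^\uparrow)^\downarrow$. A nonempty subset $A$ of a space is irreducible if whenever $A\subseteq F_1\cup F_2$ with $F_1,F_2$ closed, $A\subseteq F_1$ or $A\subseteq F_2$. $X^{(<\omega)}$ is the set of nonempty finite subsets of $X$. $P_S(X)$ is the set of nonempty compact saturated (upper) subsets of $X$ with the upper Vietoris topology, basis $\{\square U: U\text{ open}\}$, $\square U=\{Q: Q\subseteq U\}$. A net is eventually in $U$ if from some index on all its terms lie in $U$; it converges to $x$ in a topology if it is eventually in every open set containing $x$. $U\subseteq X$ is $SI_2$-open if $U$ is open and for every irreducible $F\subseteq X$, $F^\delta\cap U\ne\emptyset$ implies $F\cap U\neq\emptyset$. A net $(x_i)_{i\in I}$ $GSI_2$-converges to $x$ if there exists $\mathcal F\subseteq X^{(<\omega)}$ with $\{\uparrow G: G\in\mathcal F\}$ irreducible in $P_S(X)$ such that (i) for every open $U$, if $\uparrow G\subseteq U$ for some $G\in\mathcal F$ then $x_i\in U$ eventually, and (ii) $\bigcap_{G\in\mathcal F}\uparrow G\subseteq\uparrow x$. Let $\mathcal{O}(\mathcal{GSI}_2(X))$ be the topology of all $U\subseteq X$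 such that every net $GSI_2$-converging to a point of $U$ is eventually in $U$. $GSI_2$-convergence in $X$ is topological if for every net and point, the net $GSI_2$-converges to the point iff it converges to it in the topology $\mathcal{O}(\mathcal{GSI}_2(X))$. For $A\subseteq X$, $x\in X$, $A\ll_{I_2}x$ means: for every irreducible $D\subseteq X$ with $x\in D^\delta$, $A\cap\mathrm{cl}D\ne\emptyset$. For $x\in X$, $w(x)=\{\uparrow F: F\in X^{(<\omega)}, F\ll_{I_2}x\}$. $X$ is $QI_2$-continuous if for every $x\in X$, $w(x)$ is irreducible in $P_S(X)$ and $\uparrow x=\bigcap w(x)$. $X$ is strongly $QI_2$-continuous if it is $QI_2$-continuous and for every $F\in X^{(<\omega)}$, $x\in X$ with $F\ll_{I_2}x$, and every open $U$ with $F\subseteq U$, there is an $SI_2$-open set $W$ with $x\in W\subseteq U$. *)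

theory Defs
  imports "HOL-Analysis.Analysis"
begin

definition spec_le :: "'a topology \<Rightarrow> 'a \<Rightarrow> 'a \<Rightarrow> bool" where
  "spec_le X x y \<longleftrightarrow> x \<in> topspace X \<and> y \<in> topspace X \<and> x \<in> X closure_of {y}"

definition upset :: "'a topology \<Rightarrow> 'a set \<Rightarrow> 'a set" where
  "upset X A = {x \<in> topspace X. \<exists>a\<in>A. spec_le X a x}"

definition upper_bounds :: "'a topology \<Rightarrow> 'a set \<Rightarrow> 'a set" where
  "upper_bounds X A = {u \<in> topspace X. \<forall>a\<in>A. spec_le X a u}"

definition lower_bounds :: "'a topology \<Rightarrow> 'a set \<Rightarrow> 'a set" where
  "lower_bounds X A = {l \<in> topspace X. \<forall>a\<in>A. spec_le X l a}"

definition cut_delta :: "'a topology \<Rightarrow> 'a set \<Rightarrow> 'a set" where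
  "cut_delta X A = lower_bounds X (upper_bounds X A)"

definition irreducible_in :: "'a topology \<Rightarrow> 'a set \<Rightarrow> bool" where
  "irreducible_in X A \<longleftrightarrow> A \<noteq> {} \<and> A \<subseteq> topspace X \<and>
     (\<forall>F1 F2. closedin X F1 \<longrightarrow> closedin X F2 \<longrightarrow> A \<subseteq> F1 \<union> F2 \<longrightarrow> A \<subseteq> F1 \<or> A \<subseteq> F2)"

definition fin_subsets :: "'a topology \<Rightarrow> 'a set set" where
  "fin_subsets X = {F. F \<subseteq> topspace X \<and> finite F \<and> F \<noteq> {}}"

definition saturated_in :: "'a topology \<Rightarrow> 'a set \<Rightarrow> bool" where
  "saturated_in X A \<longleftrightarrow> A \<subseteq> topspace X \<and> upset X A = A"

definition smyth_carrier :: "'a topology \<Rightarrow> 'a set set" where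
  "smyth_carrier X = {Q. Q \<noteq> {} \<and> compactin X Q \<and> saturated_in X Q}"

definition smyth_box :: "'a topology \<Rightarrow> 'a set \<Rightarrow> 'a set set" where
  "smyth_box X U = {Q \<in> smyth_carrier X. Q \<subseteq> U}"

definition smyth_space :: "'a topology \<Rightarrow> 'a set topology" where
  "smyth_space X = topology_generated_by {smyth_box X U | U. openin X U}"

definition SI2_open :: "'a topology \<Rightarrow> 'a set \<Rightarrow> bool" where
  "SI2_open X U \<longleftrightarrow> openin X U \<and>
     (\<forall>F. irreducible_in X F \<longrightarrow> cut_delta X F \<inter> U \<noteq> {} \<longrightarrow> F \<inter> U \<noteq> {})"

text \<open>Nets are represented by their filters of tails (eventuality filters), the
  standard Isabelle/HOL rendering of nets: a net in X is a proper filter F on 'a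
  that is eventually in topspace X; "the net is eventually in U" is
  \<open>eventually (\<lambda>y. y \<in> U) F\<close>.\<close>

definition net_in :: "'a topology \<Rightarrow> 'a filter \<Rightarrow> bool" where
  "net_in X F \<longleftrightarrow> F \<noteq> bot \<and> eventually (\<lambda>y. y \<in> topspace X) F"

definition GSI2_converges :: "'a topology \<Rightarrow> 'a filter \<Rightarrow> 'a \<Rightarrow> bool" where
  "GSI2_converges X F x \<longleftrightarrow>
     (\<exists>\<F>. \<F> \<subseteq> fin_subsets X \<and> irreducible_in (smyth_space X) (upset X ` \<F>) \<and>
        (\<forall>U. openin X U \<longrightarrow> (\<exists>G\<in>\<F>. upset X G \<subseteq> U) \<longrightarrow> eventually (\<lambda>y. y \<in> U) F) \<and>
        \<Inter> (upset X ` \<F>) \<subseteq> upset X {x})"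

definition GSI2_open :: "'a topology \<Rightarrow> 'a set \<Rightarrow> bool" where
  "GSI2_open X U \<longleftrightarrow> U \<subseteq> topspace X \<and>
     (\<forall>F x. net_in X F \<longrightarrow> x \<in> U \<longrightarrow> GSI2_converges X F x \<longrightarrow> eventually (\<lambda>y. y \<in> U) F)"

definition GSI2_topological :: "'a topology \<Rightarrow> bool" where
  "GSI2_topological X \<longleftrightarrow>
     (\<forall>F. \<forall>x\<in>topspace X. net_in X F \<longrightarrow>
        (GSI2_converges X F x \<longleftrightarrow>
         (\<forall>U. GSI2_open X U \<longrightarrow> x \<in> U \<longrightarrow> eventually (\<lambda>y. y \<in> U) F)))"

definition I2_way_below :: "'a topology \<Rightarrow> 'a set \<Rightarrow> 'a \<Rightarrow> bool" where
  "I2_way_below X A x \<longleftrightarrow>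
     (\<forall>D. irreducible_in X D \<longrightarrow> x \<in> cut_delta X D \<longrightarrow> A \<inter> (X closure_of D) \<noteq> {})"

definition wI2 :: "'a topology \<Rightarrow> 'a \<Rightarrow> 'a set set" where
  "wI2 X x = {upset X F | F. F \<in> fin_subsets X \<and> I2_way_below X F x}"

definition QI2_continuous :: "'a topology \<Rightarrow> bool" where
  "QI2_continuous X \<longleftrightarrow>
     (\<forall>x\<in>topspace X. irreducible_in (smyth_space X) (wI2 X x) \<and> upset X {x} = \<Inter> (wI2 X x))"

definition strongly_QI2_continuous :: "'a topology \<Rightarrow> bool" where
  "strongly_QI2_continuous X \<longleftrightarrow> QI2_continuous X \<and>
     (\<forall>F x U. F \<in> fin_subsets X \<longrightarrow> x \<in> topspace X \<longrightarrow> I2_way_below X F x \<longrightarrow>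
        openin X U \<longrightarrow> F \<subseteq> U \<longrightarrow> (\<exists>W. SI2_open X W \<and> x \<in> W \<and> W \<subseteq> U))"

end

theory Submission
  imports Defs
begin

lemma spec_le_refl: "x \<in> topspace X \<Longrightarrow> spec_le X x x"
  using closure_of_subset[of "{x}" X] by (simp add: spec_le_def)

lemma spec_le_trans: "spec_le X a b \<Longrightarrow> spec_le X b c \<Longrightarrow> spec_le X a c"
proof -
  assume H: "spec_le X a b" "spec_le X b c"
  have "X closure_of {b} \<subseteq> X closure_of {c}"
    using H by (intro closure_of_minimal) (auto simp: spec_le_def)
  then show ?thesis using H by (auto simp: spec_le_def)
qed

lemma closed_lower: "closedin X A \<Longrightarrow> u \<in> A \<Longrightarrow> spec_le X a u \<Longrightarrow> a \<in> A"
proof -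
  assume H: "closedin X A" "u \<in> A" "spec_le X a u"
  have "X closure_of {u} \<subseteq> A"
    using H by (intro closure_of_minimal) auto
  then show ?thesis using H by (auto simp: spec_le_def)
qed

lemma open_upper: "openin X U \<Longrightarrow> a \<in> U \<Longrightarrow> spec_le X a u \<Longrightarrow> u \<in> U"
proof (rule ccontr)
  assume "openin X U" "a \<in> U" "spec_le X a u" "u \<notin> U"
  then have "u \<in> topspace X - U" "closedin X (topspace X - U)"
    by (auto simp: spec_le_def)
  then have "a \<in> topspace X - U" using closed_lower \<open>spec_le X a u\<close> by metis
  then show False using \<open>a \<in> U\<close> by blast
qed

lemma upset_sub_open: assumes "openin X U" "G \<subseteq> U" shows "upset X G \<subseteq> U"
proof
  fix y assume "y \<in> upset X G"
  then obtain a where "a \<in> G" "spec_le X a y" by (auto simp: upset_def)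
  then show "y \<in> U" using open_upper[OF assms(1)] assms(2) by blast
qed

lemma sub_upset: assumes "G \<subseteq> topspace X" shows "G \<subseteq> upset X G"
proof
  fix y assume "y \<in> G"
  then have t: "y \<in> topspace X" using assms by blast
  then have "spec_le X y y" by (rule spec_le_refl)
  then show "y \<in> upset X G" unfolding upset_def using \<open>y \<in> G\<close> t by blast
qed

lemma upset_carrier:
  assumes "G \<in> fin_subsets X"
  shows "upset X G \<in> smyth_carrier X"
proof -
  have G: "G \<subseteq> topspace X" "finite G" "G \<noteq> {}" using assms by (auto simp: fin_subsets_def)
  have ne: "upset X G \<noteq> {}" using sub_upset[OF G(1)] G(3) by blast
  have sat: "saturated_in X (upset X G)"
    unfolding saturated_in_def
  proof
    show "upset X G \<subseteq> topspace X" by (auto simp: upset_def)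
    show "upset X (upset X G) = upset X G"
    proof
      show "upset X (upset X G) \<subseteq> upset X G"
      proof
        fix y assume "y \<in> upset X (upset X G)"
        then obtain b where b: "b \<in> upset X G" "spec_le X b y" and yt: "y \<in> topspace X"
          by (auto simp: upset_def)
        then obtain a where a: "a \<in> G" "spec_le X a b" by (auto simp: upset_def)
        have "spec_le X a y" using spec_le_trans[OF a(2) b(2)] .
        then show "y \<in> upset X G" unfolding upset_def using a(1) yt by blast
      qed
      show "upset X G \<subseteq> upset X (upset X G)"
        by (rule sub_upset) (auto simp: upset_def)
    qed
  qed
  have comp: "compactin X (upset X G)"
    unfolding compactin_def
  proof (intro conjI allI impI)
    show "upset X G \<subseteq> topspace X" by (auto simp: upset_def)
    fix \<U> assume H: "(\<forall>x\<in>\<U>. openin X x) \<and> upset X G \<subseteq> \<Union>\<U>"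
    then have "\<forall>g\<in>G. \<exists>U. U \<in> \<U> \<and> g \<in> U" using sub_upset[OF G(1)] by blast
    then have "\<exists>f. \<forall>g\<in>G. f g \<in> \<U> \<and> g \<in> f g" by (rule bchoice)
    then obtain f where f: "\<forall>g\<in>G. f g \<in> \<U> \<and> g \<in> f g" by (elim exE)
    show "\<exists>\<F>. finite \<F> \<and> \<F> \<subseteq> \<U> \<and> upset X G \<subseteq> \<Union>\<F>"
    proof (intro exI conjI)
      show "finite (f ` G)" using G by simp
      show "f ` G \<subseteq> \<U>" using f by blast
      show "upset X G \<subseteq> \<Union> (f ` G)"
      proof
        fix y assume "y \<in> upset X G"
        then obtain a where "a \<in> G" and sp: "spec_le X a y" by (auto simp: upset_def)
        have op: "openin X (f a)" and af: "a \<in> f a" using f H \<open>a \<in> G\<close> by auto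
        have "y \<in> f a" by (rule open_upper[OF op af sp])
        then show "y \<in> \<Union> (f ` G)" using \<open>a \<in> G\<close> by blast
      qed
    qed
  qed
  show ?thesis using ne sat comp by (simp add: smyth_carrier_def)
qed

lemma box_open: "openin X U \<Longrightarrow> openin (smyth_space X) (smyth_box X U)"
  unfolding smyth_space_def by (rule topology_generated_by_Basis) blast

lemma in_smyth_top: "Q \<in> smyth_carrier X \<Longrightarrow> Q \<in> topspace (smyth_space X)"
  unfolding smyth_space_def topology_generated_by_topspace
proof (rule UnionI[of "smyth_box X (topspace X)"])
  show "smyth_box X (topspace X) \<in> {smyth_box X U |U. openin X U}" by blast
  assume "Q \<in> smyth_carrier X"
  then have "compactin X Q" unfolding smyth_carrier_def by blast
  then have "Q \<subseteq> topspace X" by (rule compactin_subset_topspace)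
  then show "Q \<in> smyth_box X (topspace X)" using \<open>Q \<in> smyth_carrier X\<close> by (simp add: smyth_box_def)
qed

lemma smyth_open_base:
  assumes "openin (smyth_space X) Ob" "Q \<in> Ob"
  shows "\<exists>V. openin X V \<and> Q \<in> smyth_box X V \<and> smyth_box X V \<subseteq> Ob"
proof -
  have "generate_topology_on {smyth_box X U | U. openin X U} Ob"
    using assms(1) unfolding smyth_space_def by (rule openin_topology_generated_by)
  then show ?thesis using assms(2)
  proof (induction arbitrary: Q)
    case Empty
    then show ?case by simp
  next
    case (Int a b)
    obtain V1 where "openin X V1" "Q \<in> smyth_box X V1" "smyth_box X V1 \<subseteq> a"
      using Int.IH(1)[of Q] Int.prems by blast
    moreover obtain V2 where "openin X V2" "Q \<in> smyth_box X V2" "smyth_box X V2 \<subseteq> b"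
      using Int.IH(2)[of Q] Int.prems by blast
    ultimately show ?case
      by (intro exI[of _ "V1 \<inter> V2"]) (auto simp: smyth_box_def)
  next
    case (UN K)
    then obtain k where k: "k \<in> K" "Q \<in> k" by blast
    then obtain V where "openin X V" "Q \<in> smyth_box X V" "smyth_box X V \<subseteq> k"
      using UN.IH[OF k] by blast
    then show ?case using k by blast
  next
    case (Basis s)
    then show ?case by blast
  qed
qed

lemma irr_open:
  assumes "irreducible_in T S" "openin T O1" "openin T O2" "S \<inter> O1 \<noteq> {}" "S \<inter> O2 \<noteq> {}"
  shows "S \<inter> O1 \<inter> O2 \<noteq> {}"
proof
  assume H: "S \<inter> O1 \<inter> O2 = {}"
  have c: "closedin T (topspace T - O1)" "closedin T (topspace T - O2)"
    using assms by auto
  have "S \<subseteq> (topspace T - O1) \<union> (topspace T - O2)"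
    using H assms(1) by (auto simp: irreducible_in_def)
  then have "S \<subseteq> topspace T - O1 \<or> S \<subseteq> topspace T - O2"
    using assms(1) c unfolding irreducible_in_def by blast
  then show False using assms(4,5) by blast
qed

lemma ev_base:
  assumes "B \<noteq> {}" "\<And>a b. a \<in> B \<Longrightarrow> b \<in> B \<Longrightarrow> \<exists>c\<in>B. c \<subseteq> a \<inter> b"
  shows "eventually P (INF b\<in>B. principal b) \<longleftrightarrow> (\<exists>b\<in>B. \<forall>y\<in>b. P y)"
proof -
  have "eventually P (INF b\<in>B. principal b) \<longleftrightarrow> (\<exists>b\<in>B. eventually P (principal b))"
  proof (rule eventually_INF_base)
    show "B \<noteq> {}" by fact
    fix a b assume "a \<in> B" "b \<in> B"
    then obtain c where "c \<in> B" "c \<subseteq> a \<inter> b" using assms(2) by blast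
    then show "\<exists>x\<in>B. principal x \<le> inf (principal a) (principal b)"
      by (auto simp: inf_principal)
  qed
  then show ?thesis by (simp add: eventually_principal)
qed

lemma ev_base_bot:
  assumes "B \<noteq> {}" "\<And>a b. a \<in> B \<Longrightarrow> b \<in> B \<Longrightarrow> \<exists>c\<in>B. c \<subseteq> a \<inter> b" "{} \<notin> B"
  shows "(INF b\<in>B. principal b) \<noteq> bot"
proof
  assume "(INF b\<in>B. principal b) = bot"
  then have "eventually (\<lambda>_. False) (INF b\<in>B. principal b)" by simp
  then show False using ev_base[OF assms(1,2)] assms(3) by auto
qed

lemma chain_avoid:
  assumes "finite G" "Ch \<noteq> {}" "\<forall>a\<in>Ch. \<forall>b\<in>Ch. a \<subseteq> b \<or> b \<subseteq> a"
    "\<forall>g\<in>G. \<exists>A\<in>Ch. g \<notin> A"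
  shows "\<exists>A\<in>Ch. A \<inter> G = {}"
  using assms(1,4)
proof (induction G rule: finite_induct)
  case empty
  then show ?case using assms(2) by blast
next
  case (insert g G)
  then obtain A1 where A1: "A1 \<in> Ch" "A1 \<inter> G = {}" by blast
  obtain A2 where A2: "A2 \<in> Ch" "g \<notin> A2" using insert.prems by blast
  have "A1 \<subseteq> A2 \<or> A2 \<subseteq> A1" using assms(3) A1(1) A2(1) by blast
  then show ?case
  proof
    assume "A1 \<subseteq> A2" then show ?thesis using A1 A2 by (intro bexI[of _ A1]) auto
  next
    assume "A2 \<subseteq> A1" then show ?thesis using A1 A2 by (intro bexI[of _ A2]) auto
  qed
qed

lemma rudin:
  assumes Fs: "\<F> \<subseteq> fin_subsets X"
    and irr: "irreducible_in (smyth_space X) (upset X ` \<F>)"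
    and C: "closedin X C" and meet: "\<forall>G\<in>\<F>. C \<inter> G \<noteq> {}"
  shows "\<exists>A. closedin X A \<and> A \<subseteq> C \<and> irreducible_in X A \<and> (\<forall>G\<in>\<F>. A \<inter> G \<noteq> {})"
proof -
  define K where "K = {A. closedin X A \<and> A \<subseteq> C \<and> (\<forall>G\<in>\<F>. A \<inter> G \<noteq> {})}"
  have CK: "C \<in> K" using C meet by (auto simp: K_def)
  have po: "partial_order_on K (relation_of (\<lambda>A B. B \<subseteq> A) K)"
    by (rule partial_order_on_relation_ofI) auto
  have ch: "\<exists>u\<in>K. \<forall>a\<in>Ch. a \<supseteq> u" if Ch: "Ch \<in> Chains (relation_of (\<lambda>A B. B \<subseteq> A) K)" for Ch
  proof (cases "Ch = {}")
    case True
    then show ?thesis using CK by blast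
  next
    case False
    have sub: "Ch \<subseteq> K" and cmp: "\<forall>a\<in>Ch. \<forall>b\<in>Ch. a \<subseteq> b \<or> b \<subseteq> a"
      using Ch unfolding Chains_def relation_of_def by auto
    have "\<Inter>Ch \<in> K"
      unfolding K_def
    proof (intro CollectI conjI ballI)
      show "closedin X (\<Inter>Ch)" using sub False by (intro closedin_Inter) (auto simp: K_def)
      show "\<Inter>Ch \<subseteq> C" using sub False by (auto simp: K_def)
      fix G assume G: "G \<in> \<F>"
      show "\<Inter>Ch \<inter> G \<noteq> {}"
      proof
        assume e: "\<Inter>Ch \<inter> G = {}"
        have "finite G" using G Fs by (auto simp: fin_subsets_def)
        moreover have "\<forall>g\<in>G. \<exists>A\<in>Ch. g \<notin> A" using e by blast
        ultimately obtain A where "A \<in> Ch" "A \<inter> G = {}"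
          using chain_avoid[OF _ False cmp] by blast
        then show False using sub G by (auto simp: K_def)
      qed
    qed
    then show ?thesis by blast
  qed
  obtain A where AK: "A \<in> K" and minA: "\<forall>a\<in>K. A \<supseteq> a \<longrightarrow> a = A"
    using predicate_Zorn[OF po ch] by blast
  have Acl: "closedin X A" and AC: "A \<subseteq> C" and Am: "\<forall>G\<in>\<F>. A \<inter> G \<noteq> {}"
    using AK by (auto simp: K_def)
  have Fne: "\<F> \<noteq> {}" using irr by (auto simp: irreducible_in_def)
  have "irreducible_in X A"
    unfolding irreducible_in_def
  proof (intro conjI allI impI)
    show "A \<noteq> {}" using Am Fne by blast
    show "A \<subseteq> topspace X" using Acl closedin_subset by blast
    fix F1 F2 assume F1: "closedin X F1" and F2: "closedin X F2" and cov: "A \<subseteq> F1 \<union> F2"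
    show "A \<subseteq> F1 \<or> A \<subseteq> F2"
    proof (rule ccontr)
      assume nn: "\<not> (A \<subseteq> F1 \<or> A \<subseteq> F2)"
      have "\<exists>G\<in>\<F>. A \<inter> Fi \<inter> G = {}" if Fi: "closedin X Fi" "\<not> A \<subseteq> Fi" for Fi
      proof (rule ccontr)
        assume "\<not> (\<exists>G\<in>\<F>. A \<inter> Fi \<inter> G = {})"
        then have "A \<inter> Fi \<in> K" using Acl Fi AC by (auto simp: K_def)
        then have "A \<inter> Fi = A" using minA by blast
        then show False using Fi by blast
      qed
      then obtain G1 G2 where G1: "G1 \<in> \<F>" "A \<inter> F1 \<inter> G1 = {}"
        and G2: "G2 \<in> \<F>" "A \<inter> F2 \<inter> G2 = {}" using nn F1 F2 by meson
      define O1 where "O1 = topspace X - A \<inter> F1"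
      define O2 where "O2 = topspace X - A \<inter> F2"
      have O1: "openin X O1" unfolding O1_def using Acl F1 by blast
      have O2: "openin X O2" unfolding O2_def using Acl F2 by blast
      have inbox: "upset X G \<in> smyth_box X Oi"
        if G: "G \<in> \<F>" and Oi: "Oi = topspace X - A \<inter> Fi" and Fi: "closedin X Fi"
          and e: "A \<inter> Fi \<inter> G = {}" for G Oi Fi
      proof -
        have "upset X G \<subseteq> Oi"
        proof
          fix y assume "y \<in> upset X G"
          then obtain g where g: "g \<in> G" "spec_le X g y" and yt: "y \<in> topspace X"
            by (auto simp: upset_def)
          show "y \<in> Oi"
          proof (rule ccontr)
            assume "y \<notin> Oi"
            then have "y \<in> A \<inter> Fi" using yt Oi by blast
            then have "g \<in> A \<inter> Fi" using closed_lower[OF closedin_Int[OF Acl Fi]] g(2) by blast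
            then show False using e g(1) by blast
          qed
        qed
        moreover have "upset X G \<in> smyth_carrier X" using upset_carrier G Fs by blast
        ultimately show ?thesis by (simp add: smyth_box_def)
      qed
      have "upset X ` \<F> \<inter> smyth_box X O1 \<inter> smyth_box X O2 \<noteq> {}"
      proof (rule irr_open[OF irr box_open[OF O1] box_open[OF O2]])
        show "upset X ` \<F> \<inter> smyth_box X O1 \<noteq> {}"
          using inbox[OF G1(1) O1_def F1 G1(2)] G1(1) by blast
        show "upset X ` \<F> \<inter> smyth_box X O2 \<noteq> {}"
          using inbox[OF G2(1) O2_def F2 G2(2)] G2(1) by blast
      qed
      then obtain G3 where G3: "G3 \<in> \<F>" "upset X G3 \<subseteq> O1" "upset X G3 \<subseteq> O2"
        by (auto simp: smyth_box_def)
      have "G3 \<subseteq> topspace X" using G3(1) Fs by (auto simp: fin_subsets_def)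
      then have "G3 \<subseteq> O1 \<inter> O2" using sub_upset G3 by blast
      then have "A \<inter> G3 = {}" using cov unfolding O1_def O2_def by blast
      then show False using Am G3(1) by blast
    qed
  qed
  then show ?thesis using Acl AC Am by blast
qed

lemma crux:
  assumes Fs: "\<F> \<subseteq> fin_subsets X"
    and irr: "irreducible_in (smyth_space X) (upset X ` \<F>)"
    and inter: "\<Inter>(upset X ` \<F>) \<subseteq> upset X {x}"
    and x: "x \<in> topspace X" and wb: "I2_way_below X F x"
    and U: "openin X U" and FU: "F \<subseteq> U"
  shows "\<exists>G\<in>\<F>. G \<subseteq> U"
proof (rule ccontr)
  assume nG: "\<not> (\<exists>G\<in>\<F>. G \<subseteq> U)"
  define C where "C = topspace X - U"
  have C: "closedin X C" unfolding C_def using U by blast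
  have meet: "\<forall>G\<in>\<F>. C \<inter> G \<noteq> {}"
  proof
    fix G assume "G \<in> \<F>"
    then have "G \<subseteq> topspace X" "\<not> G \<subseteq> U" using Fs nG by (auto simp: fin_subsets_def)
    then show "C \<inter> G \<noteq> {}" unfolding C_def by blast
  qed
  obtain A where Acl: "closedin X A" and AC: "A \<subseteq> C" and Airr: "irreducible_in X A"
    and Am: "\<forall>G\<in>\<F>. A \<inter> G \<noteq> {}"
    using rudin[OF Fs irr C meet] by blast
  have "x \<in> cut_delta X A"
    unfolding cut_delta_def lower_bounds_def
  proof (intro CollectI conjI ballI)
    show "x \<in> topspace X" by fact
    fix u assume u: "u \<in> upper_bounds X A"
    then have ut: "u \<in> topspace X" and ua: "\<forall>a\<in>A. spec_le X a u"
      by (auto simp: upper_bounds_def)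
    have "u \<in> \<Inter>(upset X ` \<F>)"
    proof
      fix G assume G: "G \<in> \<F>"
      then obtain g where "g \<in> A" "g \<in> G" using Am by blast
      then show "u \<in> upset X G" using ua ut unfolding upset_def by blast
    qed
    then have "u \<in> upset X {x}" using inter by blast
    then show "spec_le X x u" by (auto simp: upset_def)
  qed
  then have "F \<inter> X closure_of A \<noteq> {}" using wb Airr by (auto simp: I2_way_below_def)
  moreover have "X closure_of A = A" using Acl closure_of_closedin by blast
  ultimately show False using AC FU unfolding C_def by blast
qed

lemma gsi_si:
  assumes V: "GSI2_open X V"
  shows "SI2_open X V"
proof -
  have Vt: "V \<subseteq> topspace X" using V by (simp add: GSI2_open_def)
  have op: "openin X V"
  proof (subst openin_subopen, intro ballI)
    fix v assume vV: "v \<in> V"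
    then have vt: "v \<in> topspace X" using Vt by blast
    define B where "B = {Ob. openin X Ob \<and> v \<in> Ob}"
    have Bne: "B \<noteq> {}" using vt by (auto simp: B_def)
    have Bd: "\<exists>c\<in>B. c \<subseteq> a \<inter> b" if "a \<in> B" "b \<in> B" for a b
      using that by (intro bexI[of _ "a \<inter> b"]) (auto simp: B_def)
    have Be: "{} \<notin> B" by (auto simp: B_def)
    define N where "N = (INF b\<in>B. principal b)"
    have evN: "eventually P N \<longleftrightarrow> (\<exists>b\<in>B. \<forall>y\<in>b. P y)" for P
      unfolding N_def by (rule ev_base[OF Bne Bd])
    have net: "net_in X N"
      unfolding net_in_def N_def
    proof
      show "(INF b\<in>B. principal b) \<noteq> bot" by (rule ev_base_bot[OF Bne Bd Be])
      show "eventually (\<lambda>y. y \<in> topspace X) (INF b\<in>B. principal b)"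
        using evN[unfolded N_def, of "\<lambda>y. y \<in> topspace X"] vt by (auto simp: B_def)
    qed
    have vfin: "{v} \<in> fin_subsets X" using vt by (simp add: fin_subsets_def)
    have "GSI2_converges X N v"
      unfolding GSI2_converges_def
    proof (intro exI[of _ "{{v}}"] conjI allI impI)
      show "{{v}} \<subseteq> fin_subsets X" using vfin by blast
      show "irreducible_in (smyth_space X) (upset X ` {{v}})"
        using in_smyth_top[OF upset_carrier[OF vfin]] by (auto simp: irreducible_in_def)
      fix U assume U: "openin X U" and "\<exists>G\<in>{{v}}. upset X G \<subseteq> U"
      then have "upset X {v} \<subseteq> U" by blast
      then have "v \<in> U" using sub_upset[of "{v}" X] vt by blast
      then show "eventually (\<lambda>y. y \<in> U) N" using evN U by (auto simp: B_def)
    next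
      show "\<Inter> (upset X ` {{v}}) \<subseteq> upset X {v}" by simp
    qed
    then have "eventually (\<lambda>y. y \<in> V) N" using V net vV by (auto simp: GSI2_open_def)
    then show "\<exists>T. openin X T \<and> v \<in> T \<and> T \<subseteq> V" using evN by (auto simp: B_def)
  qed
  have "D \<inter> V \<noteq> {}" if D: "irreducible_in X D" and xD: "x \<in> cut_delta X D" and xV: "x \<in> V" for D x
  proof -
    have Dt: "D \<subseteq> topspace X" and Dne: "D \<noteq> {}" using D by (auto simp: irreducible_in_def)
    have xt: "x \<in> topspace X" using xD by (auto simp: cut_delta_def lower_bounds_def)
    define B where "B = {Ob \<inter> D | Ob. openin X Ob \<and> Ob \<inter> D \<noteq> {}}"
    have Bne: "B \<noteq> {}" using Dne Dt by (auto simp: B_def intro!: exI[of _ "topspace X"])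
    have Bd: "\<exists>c\<in>B. c \<subseteq> a \<inter> b" if ab: "a \<in> B" "b \<in> B" for a b
    proof -
      obtain O1 where "a = O1 \<inter> D" "openin X O1" "O1 \<inter> D \<noteq> {}"
        using ab(1) unfolding B_def by blast
      moreover obtain O2 where "b = O2 \<inter> D" "openin X O2" "O2 \<inter> D \<noteq> {}"
        using ab(2) unfolding B_def by blast
      moreover have "D \<inter> O1 \<inter> O2 \<noteq> {}" using irr_open[OF D] calculation by (metis inf_commute)
      ultimately show ?thesis unfolding B_def
        by (intro bexI[of _ "(O1 \<inter> O2) \<inter> D"]) (auto simp: Int_ac)
    qed
    have Be: "{} \<notin> B" by (auto simp: B_def)
    define N where "N = (INF b\<in>B. principal b)"
    have evN: "eventually P N \<longleftrightarrow> (\<exists>b\<in>B. \<forall>y\<in>b. P y)" for P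
      unfolding N_def by (rule ev_base[OF Bne Bd])
    have net: "net_in X N"
      unfolding net_in_def N_def
    proof
      show "(INF b\<in>B. principal b) \<noteq> bot" by (rule ev_base_bot[OF Bne Bd Be])
      have "topspace X \<inter> D \<in> B" using Dne Dt unfolding B_def by blast
      then show "eventually (\<lambda>y. y \<in> topspace X) (INF b\<in>B. principal b)"
        using evN[unfolded N_def, of "\<lambda>y. y \<in> topspace X"] by blast
    qed
    have dfin: "{d} \<in> fin_subsets X" if "d \<in> D" for d using that Dt by (auto simp: fin_subsets_def)
    have "GSI2_converges X N x"
      unfolding GSI2_converges_def
    proof (intro exI[of _ "(\<lambda>d. {d}) ` D"] conjI allI impI)
      show "(\<lambda>d. {d}) ` D \<subseteq> fin_subsets X" using dfin by blast
      show "irreducible_in (smyth_space X) (upset X ` (\<lambda>d. {d}) ` D)"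
        unfolding irreducible_in_def
      proof (intro conjI allI impI)
        show "upset X ` (\<lambda>d. {d}) ` D \<noteq> {}" using Dne by blast
        show "upset X ` (\<lambda>d. {d}) ` D \<subseteq> topspace (smyth_space X)"
          using in_smyth_top upset_carrier dfin by blast
        fix K1 K2 assume K1: "closedin (smyth_space X) K1" and K2: "closedin (smyth_space X) K2"
          and cov: "upset X ` (\<lambda>d. {d}) ` D \<subseteq> K1 \<union> K2"
        show "upset X ` (\<lambda>d. {d}) ` D \<subseteq> K1 \<or> upset X ` (\<lambda>d. {d}) ` D \<subseteq> K2"
        proof (rule ccontr)
          assume "\<not> ?thesis"
          then obtain d1 d2 where d1: "d1 \<in> D" "upset X {d1} \<notin> K1"
            and d2: "d2 \<in> D" "upset X {d2} \<notin> K2" by auto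
          have "upset X {d1} \<in> topspace (smyth_space X) - K1"
            using d1 in_smyth_top upset_carrier dfin by blast
          then obtain W1 where W1: "openin X W1" "upset X {d1} \<in> smyth_box X W1"
            "smyth_box X W1 \<subseteq> topspace (smyth_space X) - K1"
            using smyth_open_base[of X "topspace (smyth_space X) - K1"] K1 by blast
          have "upset X {d2} \<in> topspace (smyth_space X) - K2"
            using d2 in_smyth_top upset_carrier dfin by blast
          then obtain W2 where W2: "openin X W2" "upset X {d2} \<in> smyth_box X W2"
            "smyth_box X W2 \<subseteq> topspace (smyth_space X) - K2"
            using smyth_open_base[of X "topspace (smyth_space X) - K2"] K2 by blast
          have "d1 \<in> W1" using W1(2) sub_upset[of "{d1}" X] d1 Dt by (auto simp: smyth_box_def)
          have "d2 \<in> W2" using W2(2) sub_upset[of "{d2}" X] d2 Dt by (auto simp: smyth_box_def)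
          have "D \<inter> W1 \<inter> W2 \<noteq> {}"
            using irr_open[OF D W1(1) W2(1)] \<open>d1 \<in> W1\<close> \<open>d2 \<in> W2\<close> d1 d2 by blast
          then obtain d3 where d3: "d3 \<in> D" "d3 \<in> W1" "d3 \<in> W2" by blast
          have "upset X {d3} \<in> smyth_carrier X" using upset_carrier dfin d3 by blast
          then have "upset X {d3} \<in> smyth_box X W1" "upset X {d3} \<in> smyth_box X W2"
            using upset_sub_open[OF W1(1), of "{d3}"] upset_sub_open[OF W2(1), of "{d3}"] d3
            by (auto simp: smyth_box_def)
          then have "upset X {d3} \<notin> K1" "upset X {d3} \<notin> K2" using W1(3) W2(3) by blast+
          then show False using cov d3(1) by blast
        qed
      qed
    next
      fix U assume U: "openin X U" and "\<exists>G\<in>(\<lambda>d. {d}) ` D. upset X G \<subseteq> U"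
      then obtain d where d: "d \<in> D" "upset X {d} \<subseteq> U" by blast
      then have "d \<in> U" using sub_upset[of "{d}" X] Dt by blast
      then have "U \<inter> D \<in> B" using U d unfolding B_def by blast
      then show "eventually (\<lambda>y. y \<in> U) N" unfolding evN[of "\<lambda>y. y \<in> U"] by blast
    next
      show "\<Inter> (upset X ` (\<lambda>d. {d}) ` D) \<subseteq> upset X {x}"
      proof
        fix u assume u: "u \<in> \<Inter> (upset X ` (\<lambda>d. {d}) ` D)"
        then have ut: "u \<in> topspace X" using Dne by (auto simp: upset_def)
        have "\<forall>d\<in>D. spec_le X d u" using u by (auto simp: upset_def)
        then have "u \<in> upper_bounds X D" using ut by (simp add: upper_bounds_def)
        then have "spec_le X x u" using xD by (auto simp: cut_delta_def lower_bounds_def)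
        then show "u \<in> upset X {x}" using ut by (simp add: upset_def)
      qed
    qed
    then have "eventually (\<lambda>y. y \<in> V) N" using V net xV unfolding GSI2_open_def by blast
    then obtain b where "b \<in> B" "b \<subseteq> V" unfolding evN[of "\<lambda>y. y \<in> V"] by blast
    then show ?thesis unfolding B_def by blast
  qed
  then show ?thesis using op by (auto simp: SI2_open_def)
qed

lemma key:
  assumes top: "GSI2_topological X" and x: "x \<in> topspace X"
  shows "\<exists>\<F>. \<F> \<subseteq> fin_subsets X \<and> irreducible_in (smyth_space X) (upset X ` \<F>) \<and>
     \<Inter>(upset X ` \<F>) \<subseteq> upset X {x} \<and> (\<forall>G\<in>\<F>. I2_way_below X G x) \<and>
     (\<forall>F U. I2_way_below X F x \<longrightarrow> openin X U \<longrightarrow> F \<subseteq> U \<longrightarrow> (\<exists>G\<in>\<F>. G \<subseteq> U)) \<and>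
     (\<forall>U. openin X U \<longrightarrow> (\<exists>G\<in>\<F>. upset X G \<subseteq> U) \<longrightarrow> (\<exists>V. GSI2_open X V \<and> x \<in> V \<and> V \<subseteq> U))"
proof -
  define B where "B = {V. GSI2_open X V \<and> x \<in> V}"
  have gt: "GSI2_open X (topspace X)" by (auto simp: GSI2_open_def net_in_def)
  have gint: "GSI2_open X (V1 \<inter> V2)" if "GSI2_open X V1" "GSI2_open X V2" for V1 V2
    unfolding GSI2_open_def
  proof (intro conjI allI impI)
    show "V1 \<inter> V2 \<subseteq> topspace X" using that by (auto simp: GSI2_open_def)
    fix F y assume "net_in X F" "y \<in> V1 \<inter> V2" "GSI2_converges X F y"
    then have "eventually (\<lambda>z. z \<in> V1) F" "eventually (\<lambda>z. z \<in> V2) F"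
      using that unfolding GSI2_open_def by blast+
    then show "eventually (\<lambda>z. z \<in> V1 \<inter> V2) F"
      by (rule eventually_elim2) simp
  qed
  have Bne: "B \<noteq> {}" using gt x by (auto simp: B_def)
  have Bd: "\<exists>c\<in>B. c \<subseteq> a \<inter> b" if "a \<in> B" "b \<in> B" for a b
    using that gint by (intro bexI[of _ "a \<inter> b"]) (auto simp: B_def)
  have Be: "{} \<notin> B" by (auto simp: B_def)
  define N where "N = (INF b\<in>B. principal b)"
  have evN: "eventually P N \<longleftrightarrow> (\<exists>b\<in>B. \<forall>y\<in>b. P y)" for P
    unfolding N_def by (rule ev_base[OF Bne Bd])
  have net: "net_in X N"
    unfolding net_in_def
  proof
    show "N \<noteq> bot" unfolding N_def by (rule ev_base_bot[OF Bne Bd Be])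
    have "topspace X \<in> B" using gt x by (auto simp: B_def)
    then show "eventually (\<lambda>y. y \<in> topspace X) N" unfolding evN[of "\<lambda>y. y \<in> topspace X"] by blast
  qed
  have "\<forall>U. GSI2_open X U \<longrightarrow> x \<in> U \<longrightarrow> eventually (\<lambda>y. y \<in> U) N"
  proof (intro allI impI)
    fix U assume "GSI2_open X U" "x \<in> U"
    then have "U \<in> B" by (simp add: B_def)
    then show "eventually (\<lambda>y. y \<in> U) N" unfolding evN[of "\<lambda>y. y \<in> U"] by blast
  qed
  then have "GSI2_converges X N x" using top x net unfolding GSI2_topological_def by blast
  then obtain \<F> where Fs: "\<F> \<subseteq> fin_subsets X" and irr: "irreducible_in (smyth_space X) (upset X ` \<F>)"
    and ev: "\<forall>U. openin X U \<longrightarrow> (\<exists>G\<in>\<F>. upset X G \<subseteq> U) \<longrightarrow> eventually (\<lambda>y. y \<in> U) N"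
    and inter: "\<Inter> (upset X ` \<F>) \<subseteq> upset X {x}"
    unfolding GSI2_converges_def by blast
  have nb: "\<forall>U. openin X U \<longrightarrow> (\<exists>G\<in>\<F>. upset X G \<subseteq> U) \<longrightarrow> (\<exists>V. GSI2_open X V \<and> x \<in> V \<and> V \<subseteq> U)"
  proof (intro allI impI)
    fix U assume "openin X U" "\<exists>G\<in>\<F>. upset X G \<subseteq> U"
    then have "eventually (\<lambda>y. y \<in> U) N" using ev by blast
    then obtain b where "b \<in> B" "\<forall>y\<in>b. y \<in> U" unfolding evN[of "\<lambda>y. y \<in> U"] by blast
    then show "\<exists>V. GSI2_open X V \<and> x \<in> V \<and> V \<subseteq> U" unfolding B_def by blast
  qed
  have wb: "\<forall>G\<in>\<F>. I2_way_below X G x"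
  proof
    fix G assume G: "G \<in> \<F>"
    then have Gt: "G \<subseteq> topspace X" using Fs by (auto simp: fin_subsets_def)
    show "I2_way_below X G x"
      unfolding I2_way_below_def
    proof (intro allI impI)
      fix D assume D: "irreducible_in X D" and xD: "x \<in> cut_delta X D"
      show "G \<inter> X closure_of D \<noteq> {}"
      proof
        assume e: "G \<inter> X closure_of D = {}"
        define U where "U = topspace X - X closure_of D"
        have U: "openin X U" unfolding U_def by (intro openin_diff) auto
        have "G \<subseteq> U" using e Gt unfolding U_def by blast
        then have "upset X G \<subseteq> U" by (rule upset_sub_open[OF U])
        then obtain V where V: "GSI2_open X V" "x \<in> V" "V \<subseteq> U" using nb U G by blast
        have "SI2_open X V" by (rule gsi_si[OF V(1)])
        then have "D \<inter> V \<noteq> {}" using D xD V(2) unfolding SI2_open_def by blast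
        moreover have "D \<subseteq> X closure_of D"
          using D closure_of_subset unfolding irreducible_in_def by blast
        ultimately show False using V(3) unfolding U_def by blast
      qed
    qed
  qed
  have cr: "\<forall>F U. I2_way_below X F x \<longrightarrow> openin X U \<longrightarrow> F \<subseteq> U \<longrightarrow> (\<exists>G\<in>\<F>. G \<subseteq> U)"
  proof (intro allI impI)
    fix F U assume "I2_way_below X F x" "openin X U" "F \<subseteq> U"
    then show "\<exists>G\<in>\<F>. G \<subseteq> U" by (rule crux[OF Fs irr inter x])
  qed
  show ?thesis using Fs irr inter wb cr nb by blast
qed

theorem proposition4p10:
  fixes X :: "'a topology"
  assumes "t0_space X"
    and "GSI2_topological X"
  shows "strongly_QI2_continuous X"
proof -
  have cont: "irreducible_in (smyth_space X) (wI2 X x) \<and> upset X {x} = \<Inter> (wI2 X x)"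
    if x: "x \<in> topspace X" for x
  proof -
    obtain \<F> where Fs: "\<F> \<subseteq> fin_subsets X" and irr: "irreducible_in (smyth_space X) (upset X ` \<F>)"
      and inter: "\<Inter>(upset X ` \<F>) \<subseteq> upset X {x}" and wb: "\<forall>G\<in>\<F>. I2_way_below X G x"
      and cr: "\<forall>F U. I2_way_below X F x \<longrightarrow> openin X U \<longrightarrow> F \<subseteq> U \<longrightarrow> (\<exists>G\<in>\<F>. G \<subseteq> U)"
      and "\<forall>U. openin X U \<longrightarrow> (\<exists>G\<in>\<F>. upset X G \<subseteq> U) \<longrightarrow> (\<exists>V. GSI2_open X V \<and> x \<in> V \<and> V \<subseteq> U)"
      using key[OF assms(2) x] by (elim exE conjE) (rule that; assumption)
    have Fne: "\<F> \<noteq> {}" using irr by (auto simp: irreducible_in_def)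
    have sub: "upset X ` \<F> \<subseteq> wI2 X x"
    proof
      fix Q assume "Q \<in> upset X ` \<F>"
      then obtain G where G: "G \<in> \<F>" "Q = upset X G" by blast
      have "G \<in> fin_subsets X" "I2_way_below X G x" using G(1) Fs wb by blast+
      then show "Q \<in> wI2 X x" unfolding wI2_def G(2) by blast
    qed
    have wtop: "wI2 X x \<subseteq> topspace (smyth_space X)"
    proof
      fix Q assume "Q \<in> wI2 X x"
      then obtain F where F: "F \<in> fin_subsets X" "Q = upset X F" unfolding wI2_def by blast
      show "Q \<in> topspace (smyth_space X)" unfolding F(2) by (rule in_smyth_top[OF upset_carrier[OF F(1)]])
    qed
    have cl: "wI2 X x \<subseteq> K" if K: "closedin (smyth_space X) K" and FK: "upset X ` \<F> \<subseteq> K" for K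
    proof
      fix Q assume Q: "Q \<in> wI2 X x"
      then obtain F where F: "F \<in> fin_subsets X" "I2_way_below X F x" "Q = upset X F"
        unfolding wI2_def by blast
      show "Q \<in> K"
      proof (rule ccontr)
        assume "Q \<notin> K"
        then have QO: "Q \<in> topspace (smyth_space X) - K" using wtop Q by blast
        have "openin (smyth_space X) (topspace (smyth_space X) - K)" using K by blast
        then obtain V where V: "openin X V" "Q \<in> smyth_box X V" "smyth_box X V \<subseteq> topspace (smyth_space X) - K"
          using smyth_open_base[OF _ QO] by blast
        have Ft: "F \<subseteq> topspace X" using F(1) by (simp add: fin_subsets_def)
        have "F \<subseteq> V" using V(2) F(3) sub_upset[OF Ft] by (auto simp: smyth_box_def)
        then obtain G where G: "G \<in> \<F>" "G \<subseteq> V" using cr F(2) V(1) by blast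
        have "G \<in> fin_subsets X" using G(1) Fs by blast
        then have "upset X G \<in> smyth_carrier X" by (rule upset_carrier)
        moreover have "upset X G \<subseteq> V" by (rule upset_sub_open[OF V(1) G(2)])
        ultimately have "upset X G \<in> smyth_box X V" by (simp add: smyth_box_def)
        then have "upset X G \<notin> K" using V(3) by blast
        then show False using FK G(1) by blast
      qed
    qed
    have irrw: "irreducible_in (smyth_space X) (wI2 X x)"
      unfolding irreducible_in_def
    proof (intro conjI allI impI)
      show "wI2 X x \<noteq> {}" using sub Fne by blast
      show "wI2 X x \<subseteq> topspace (smyth_space X)" by (rule wtop)
      fix K1 K2 assume K1: "closedin (smyth_space X) K1" and K2: "closedin (smyth_space X) K2"
        and cov: "wI2 X x \<subseteq> K1 \<union> K2"
      have "upset X ` \<F> \<subseteq> K1 \<or> upset X ` \<F> \<subseteq> K2"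
        using irr K1 K2 cov sub unfolding irreducible_in_def by blast
      then show "wI2 X x \<subseteq> K1 \<or> wI2 X x \<subseteq> K2" using cl K1 K2 by blast
    qed
    have eq: "upset X {x} = \<Inter> (wI2 X x)"
    proof
      have "\<Inter> (wI2 X x) \<subseteq> \<Inter> (upset X ` \<F>)" using sub by (rule Inter_anti_mono)
      then show "\<Inter> (wI2 X x) \<subseteq> upset X {x}" using inter by blast
      show "upset X {x} \<subseteq> \<Inter> (wI2 X x)"
      proof
        fix u assume u: "u \<in> upset X {x}"
        show "u \<in> \<Inter> (wI2 X x)"
        proof
          fix Q assume "Q \<in> wI2 X x"
          then obtain F where F: "F \<in> fin_subsets X" "I2_way_below X F x" "Q = upset X F"
            unfolding wI2_def by blast
          have Dx: "irreducible_in X {x}" using x by (auto simp: irreducible_in_def)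
          have "x \<in> cut_delta X {x}"
            using x by (auto simp: cut_delta_def lower_bounds_def upper_bounds_def)
          then have "F \<inter> X closure_of {x} \<noteq> {}" using F(2) Dx unfolding I2_way_below_def by blast
          then obtain f where f: "f \<in> F" "f \<in> X closure_of {x}" by blast
          have ft: "f \<in> topspace X" using F(1) f(1) by (auto simp: fin_subsets_def)
          have fx: "spec_le X f x" using ft x f(2) by (simp add: spec_le_def)
          have ux: "spec_le X x u" and ut: "u \<in> topspace X" using u by (auto simp: upset_def)
          have "spec_le X f u" by (rule spec_le_trans[OF fx ux])
          then show "u \<in> Q" unfolding F(3) upset_def using f(1) ut by blast
        qed
      qed
    qed
    show ?thesis using irrw eq by blast
  qed
  have strong: "\<exists>W. SI2_open X W \<and> x \<in> W \<and> W \<subseteq> U"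
    if H: "F \<in> fin_subsets X" "x \<in> topspace X" "I2_way_below X F x" "openin X U" "F \<subseteq> U" for F x U
  proof -
    obtain \<F> where Fs: "\<F> \<subseteq> fin_subsets X" and "irreducible_in (smyth_space X) (upset X ` \<F>)"
      and "\<Inter>(upset X ` \<F>) \<subseteq> upset X {x}" and "\<forall>G\<in>\<F>. I2_way_below X G x"
      and cr: "\<forall>F U. I2_way_below X F x \<longrightarrow> openin X U \<longrightarrow> F \<subseteq> U \<longrightarrow> (\<exists>G\<in>\<F>. G \<subseteq> U)"
      and nb: "\<forall>U. openin X U \<longrightarrow> (\<exists>G\<in>\<F>. upset X G \<subseteq> U) \<longrightarrow> (\<exists>V. GSI2_open X V \<and> x \<in> V \<and> V \<subseteq> U)"
      using key[OF assms(2) H(2)] by (elim exE conjE) (rule that; assumption)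
    obtain G where G: "G \<in> \<F>" "G \<subseteq> U" using cr H(3,4,5) by blast
    have "upset X G \<subseteq> U" by (rule upset_sub_open[OF H(4) G(2)])
    then obtain V where V: "GSI2_open X V" "x \<in> V" "V \<subseteq> U" using nb H(4) G(1) by blast
    show ?thesis using gsi_si[OF V(1)] V(2,3) by blast
  qed
  show ?thesis
    unfolding strongly_QI2_continuous_def QI2_continuous_def
    using cont strong by blast
qed

end
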